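(* Let $k\ge 1$ and let $\Delta^+=\{(\vec x,\vec y)\in\mathbb R^k\times\mathbb R^k:\ x_i<y_i \text{ for all } i=1,\dots,k\}$. Call a pair $(\vec l,\vec b)\in\mathbb R^k\times\mathbb R^k$ admissible if $\vec l=(l_1,\dots,l_k)$ is a unit vector (Euclidean norm $1$) with $l_i>0$ for every $i$, and $\vec b=(b_1,\dots,b_k)$ satisfies $\sum_{i=1}^k b_i=0$. For an admissible pair let $\pi_{(\vec l,\vec b)}=\{(s\vec l+\vec b,\ t\vec l+\vec b): s,t\in\mathbb R,\ s<t\}\subseteq\mathbb R^k\times\mathbb R^k$. Then for every $(\vec x,\vec y)\in\Delta^+$ there exists one and only one admissible pair $(\vec l,\vec b)$ such that $(\vec x,\vec y)\in\pi_{(\vec l,\vec b)}$. *)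

theory Defs
  imports "HOL-Analysis.Analysis"
begin

text \<open>Vectors in R^k are modelled as real ^ 'k for a finite index type 'k (k = CARD('k) \<ge> 1).\<close>

definition Delta_plus :: "((real ^ 'k) \<times> (real ^ 'k)) set" where
  "Delta_plus = {p. \<forall>i. fst p $ i < snd p $ i}"

definition admissible :: "real ^ 'k \<Rightarrow> real ^ 'k \<Rightarrow> bool" where
  "admissible l b \<longleftrightarrow> norm l = 1 \<and> (\<forall>i. l $ i > 0) \<and> (\<Sum>i\<in>UNIV. b $ i) = 0"

definition pi_lb :: "real ^ 'k \<Rightarrow> real ^ 'k \<Rightarrow> ((real ^ 'k) \<times> (real ^ 'k)) set" where
  "pi_lb l b = {(s *\<^sub>R l + b, t *\<^sub>R l + b) | s t. s < t}"

end

theory Submission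
  imports Defs
begin

lemma uniq_aux:
  fixes x y l b :: "real ^ 'k"
  assumes adm: "admissible l b" and st: "s < t" and xe: "x = s *\<^sub>R l + b" and ye: "y = t *\<^sub>R l + b"
  shows "l = (1 / norm (y - x)) *\<^sub>R (y - x)"
    and "b = x - ((\<Sum>i\<in>UNIV. x $ i) / (\<Sum>i\<in>UNIV. l $ i)) *\<^sub>R l"
proof -
  have d: "y - x = (t - s) *\<^sub>R l" using xe ye by (simp add: algebra_simps)
  have nl: "norm l = 1" using adm by (simp add: admissible_def)
  have n: "norm (y - x) = t - s" using d nl st by simp
  show l: "l = (1 / norm (y - x)) *\<^sub>R (y - x)" using d n st by simp
  have pos: "\<forall>i. l $ i > 0" using adm by (simp add: admissible_def)
  have S: "(\<Sum>i\<in>UNIV. l $ i) > 0"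
    by (rule sum_pos) (use pos in auto)
  have sb: "(\<Sum>i\<in>UNIV. b $ i) = 0" using adm by (simp add: admissible_def)
  have "(\<Sum>i\<in>UNIV. x $ i) = s * (\<Sum>i\<in>UNIV. l $ i)"
    using sb by (simp add: xe sum.distrib sum_distrib_left)
  hence "s = (\<Sum>i\<in>UNIV. x $ i) / (\<Sum>i\<in>UNIV. l $ i)" using S by simp
  thus "b = x - ((\<Sum>i\<in>UNIV. x $ i) / (\<Sum>i\<in>UNIV. l $ i)) *\<^sub>R l" using xe by simp
qed

theorem proposition2p2:
  fixes x y :: "real ^ 'k"
  assumes "(x, y) \<in> Delta_plus"
  shows "\<exists>!lb. admissible (fst lb) (snd lb) \<and> (x, y) \<in> pi_lb (fst lb) (snd lb)"
proof -
  define d where "d = y - x"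
  have dpos: "\<forall>i. d $ i > 0" using assms by (simp add: Delta_plus_def d_def)
  have "d $ undefined \<noteq> 0" using dpos by (metis less_irrefl)
  hence dn0: "d \<noteq> 0" by auto
  hence nd: "norm d > 0" by simp
  define l where "l = (1 / norm d) *\<^sub>R d"
  define s where "s = (\<Sum>i\<in>UNIV. x $ i) / (\<Sum>i\<in>UNIV. l $ i)"
  define b where "b = x - s *\<^sub>R l"
  have lpos: "\<forall>i. l $ i > 0" using dpos nd by (simp add: l_def)
  have S: "(\<Sum>i\<in>UNIV. l $ i) > 0"
    by (rule sum_pos) (use lpos in auto)
  have nl: "norm l = 1" using nd by (simp add: l_def)
  have sb: "(\<Sum>i\<in>UNIV. b $ i) = 0"
    using S by (simp add: b_def s_def sum_subtractf sum_divide_distrib[symmetric] sum_distrib_left[symmetric])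
  have adm: "admissible l b" using nl lpos sb by (simp add: admissible_def)
  have xe: "x = s *\<^sub>R l + b" by (simp add: b_def)
  have nl2: "norm d *\<^sub>R l = d" using nd by (simp add: l_def)
  have ye: "y = (s + norm d) *\<^sub>R l + b"
  proof -
    have "(s + norm d) *\<^sub>R l + b = x + norm d *\<^sub>R l"
      by (simp add: b_def scaleR_add_left)
    also have "\<dots> = y" using nl2 by (simp add: d_def)
    finally show ?thesis by simp
  qed
  have mem: "(x, y) \<in> pi_lb l b"
    unfolding pi_lb_def using xe ye nd by (intro CollectI exI[of _ s] exI[of _ "s + norm d"]) auto
  show ?thesis
  proof (rule ex1I[of _ "(l, b)"])
    show "admissible (fst (l, b)) (snd (l, b)) \<and> (x, y) \<in> pi_lb (fst (l, b)) (snd (l, b))"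
      using adm mem by simp
  next
    fix lb :: "(real ^ 'k) \<times> (real ^ 'k)"
    assume h: "admissible (fst lb) (snd lb) \<and> (x, y) \<in> pi_lb (fst lb) (snd lb)"
    then obtain s' t' where st: "s' < t'" and xe': "x = s' *\<^sub>R fst lb + snd lb"
      and ye': "y = t' *\<^sub>R fst lb + snd lb"
      by (auto simp: pi_lb_def)
    have a: "admissible (fst lb) (snd lb)" using h by simp
    have l1: "fst lb = l"
      using uniq_aux(1)[OF a st xe' ye'] by (simp add: l_def d_def)
    have b1: "snd lb = b"
      using uniq_aux(2)[OF a st xe' ye'] l1 by (simp add: b_def s_def)
    show "lb = (l, b)" using l1 b1 by (simp add: prod_eq_iff)
  qed
qed

end
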